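(* Let $\alpha\in\mathbb{N}=\{0,1,2,\dots\}$. (i) If $m$ is a positive odd integer with $m>6\alpha+2$ and $\mathbb{S}=\langle 6,6\alpha+2,m\rangle$, then $Betti(\mathbb{S})=\{18\alpha+6,\,2m\}$. (ii) If $n\in\mathbb{N}$ with $3\nmid n$ and $n>6\alpha+3$ and $\mathbb{S}=\langle 6,6\alpha+3,n\rangle$, then $Betti(\mathbb{S})=\{12\alpha+6,\,3n\}$. (iii) If $p$ is a positive odd integer with $p>6\alpha+4$ and $\mathbb{S}=\langle 6,6\alpha+4,p\rangle$, then $Betti(\mathbb{S})=\{18\alpha+12,\,2p\}$.
   Context: $\mathbb{N}$ denotes the set of nonnegative integers. For positive integers $a_1,\dots,a_e$ with $\gcd=1$, $\langle a_1,\dots,a_e\rangle=\{\lambda_1a_1+\dots+\lambda_ea_e:\lambda_i\in\mathbb{N}\}$. For $a\in\mathbb{S}$, $Z(a)=\{(\eta_1,\dots,\eta_e)\in\mathbb{N}^e:\sum\eta_ia_i=a\}$. For $x,y\in\mathbb{N}^e$, $\gcd\{x,y\}$ is the componentwise minimum. For $a\in\mathbb{S}\setminus\{0\}$, $\nabla_a$ is the graph with vertex set $Z(a)$, with $x,y$ adjacent iff $\gcd\{x,y\}\neq0$; $a$ is a Betti element if $\nabla_a$ is disconnected, and $Betti(\mathbb{S})$ is the set of Betti elements. *)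

theory Defs
  imports Main
begin

definition lin_comb :: "nat list \<Rightarrow> nat list \<Rightarrow> nat" where
  "lin_comb gens x = (\<Sum>i<length gens. x ! i * gens ! i)"

definition semigroup_gen :: "nat list \<Rightarrow> nat set" where
  "semigroup_gen gens = {s. \<exists>x. length x = length gens \<and> lin_comb gens x = s}"

definition factorizations :: "nat list \<Rightarrow> nat \<Rightarrow> nat list set" where
  "factorizations gens a = {x. length x = length gens \<and> lin_comb gens x = a}"

definition gcd_vec :: "nat list \<Rightarrow> nat list \<Rightarrow> nat list" where
  "gcd_vec x y = map2 min x y"

definition nabla_adj :: "nat list \<Rightarrow> nat \<Rightarrow> nat list \<Rightarrow> nat list \<Rightarrow> bool" where
  "nabla_adj gens a x y \<longleftrightarrow> x \<in> factorizations gens a \<and> y \<in> factorizations gens a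
     \<and> gcd_vec x y \<noteq> replicate (length gens) 0"

definition nabla_connected :: "nat list \<Rightarrow> nat \<Rightarrow> bool" where
  "nabla_connected gens a \<longleftrightarrow>
     (\<forall>x\<in>factorizations gens a. \<forall>y\<in>factorizations gens a. (nabla_adj gens a)\<^sup>*\<^sup>* x y)"

definition Betti :: "nat list \<Rightarrow> nat set" where
  "Betti gens = {a \<in> semigroup_gen gens - {0}. \<not> nabla_connected gens a}"

end

theory Submission
  imports Defs
begin


lemma lc3: "lin_comb [a1,a2,a3] [x1,x2,x3] = x1*a1+x2*a2+x3*a3"
  by (simp add: lin_comb_def eval_nat_numeral lessThan_Suc)

lemma len3: "length x = 3 \<Longrightarrow> \<exists>x1 x2 x3. x = [x1,x2,x3]"
  by (cases x; cases "tl x"; cases "tl (tl x)"; auto)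

lemma fact3: "x \<in> factorizations [a1,a2,a3] a \<longleftrightarrow>
   (\<exists>x1 x2 x3. x = [x1,x2,x3] \<and> x1*a1+x2*a2+x3*a3 = a)"
proof
  assume "x \<in> factorizations [a1,a2,a3] a"
  then have "length x = 3" "lin_comb [a1,a2,a3] x = a" unfolding factorizations_def by auto
  then show "\<exists>x1 x2 x3. x = [x1,x2,x3] \<and> x1*a1+x2*a2+x3*a3 = a" using len3 lc3 by metis
next
  assume "\<exists>x1 x2 x3. x = [x1,x2,x3] \<and> x1*a1+x2*a2+x3*a3 = a"
  then show "x \<in> factorizations [a1,a2,a3] a" unfolding factorizations_def using lc3 by auto
qed

lemma adj3: "nabla_adj [a1,a2,a3] a [x1,x2,x3] [y1,y2,y3] \<longleftrightarrow>
   x1*a1+x2*a2+x3*a3 = a \<and> y1*a1+y2*a2+y3*a3 = a \<and> (x1 \<noteq> 0 \<and> y1 \<noteq> 0 \<or> x2 \<noteq> 0 \<and> y2 \<noteq> 0 \<or> x3 \<noteq> 0 \<and> y3 \<noteq> 0)"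
  unfolding nabla_adj_def fact3 gcd_vec_def by (auto simp: eval_nat_numeral)

lemma gcd_vec_comm: "gcd_vec x y = gcd_vec y x"
  unfolding gcd_vec_def
  apply (induction x arbitrary: y)
   apply simp
  subgoal for a x y by (cases y) (auto simp: min.commute)
  done

lemma adj_sym: "nabla_adj g a x y \<Longrightarrow> nabla_adj g a y x"
  unfolding nabla_adj_def using gcd_vec_comm by metis

lemma reach_sym: "(nabla_adj g a)\<^sup>*\<^sup>* x y \<Longrightarrow> (nabla_adj g a)\<^sup>*\<^sup>* y x"
  by (induction rule: rtranclp_induct) (auto intro: adj_sym converse_rtranclp_into_rtranclp)

lemma normal_reach:
  fixes a1 a2 a3 c d e u v a :: nat
  assumes hA: "c*a1 = d*a2" and hB: "e*a3 = u*a1 + v*a2" and e0: "e > 0" and d0: "d > 0"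
    and na: "a \<noteq> d*a2" and nb: "a \<noteq> e*a3"
  shows "\<forall>x1 x2. x1*a1+x2*a2+x3*a3 = a \<longrightarrow> (\<exists>n1 n2 n3. n2 < d \<and> n3 < e \<and>
           n1*a1+n2*a2+n3*a3 = a \<and> (nabla_adj [a1,a2,a3] a)\<^sup>*\<^sup>* [x1,x2,x3] [n1,n2,n3])"
proof (induction x3 rule: less_induct)
  case (less x3)
  note outerIH = less.IH
  show ?case
  proof (intro allI)
    fix x1 x2
    show "x1*a1+x2*a2+x3*a3 = a \<longrightarrow> (\<exists>n1 n2 n3. n2 < d \<and> n3 < e \<and>
           n1*a1+n2*a2+n3*a3 = a \<and> (nabla_adj [a1,a2,a3] a)\<^sup>*\<^sup>* [x1,x2,x3] [n1,n2,n3])"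
    proof (induction x2 arbitrary: x1 rule: less_induct)
      case (less x2)
      show ?case
      proof
        assume val: "x1*a1+x2*a2+x3*a3 = a"
        show "\<exists>n1 n2 n3. n2 < d \<and> n3 < e \<and>
           n1*a1+n2*a2+n3*a3 = a \<and> (nabla_adj [a1,a2,a3] a)\<^sup>*\<^sup>* [x1,x2,x3] [n1,n2,n3]"
        proof (cases "x3 \<ge> e")
          case True
          then obtain t where t: "x3 = e + t" using le_Suc_ex by blast
          have val2: "(x1+u)*a1+(x2+v)*a2+t*a3 = a"
            using val hB unfolding t by (simp add: algebra_simps)
          have "x1 \<noteq> 0 \<or> x2 \<noteq> 0 \<or> t \<noteq> 0"
            using val nb t by auto
          then have adj: "nabla_adj [a1,a2,a3] a [x1,x2,x3] [x1+u,x2+v,t]"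
            using val val2 t by (auto simp: adj3)
          have "t < x3" using t e0 by simp
          from outerIH[OF this] val2 obtain n1 n2 n3 where
            "n2 < d \<and> n3 < e \<and> n1*a1+n2*a2+n3*a3 = a \<and> (nabla_adj [a1,a2,a3] a)\<^sup>*\<^sup>* [x1+u,x2+v,t] [n1,n2,n3]"
            by blast
          then show ?thesis using adj by (blast intro: converse_rtranclp_into_rtranclp)
        next
          case False
          show ?thesis
          proof (cases "x2 \<ge> d")
            case True
            then obtain t where t: "x2 = d + t" using le_Suc_ex by blast
            have val2: "(x1+c)*a1+t*a2+x3*a3 = a"
              using val hA unfolding t by (simp add: algebra_simps)
            have "x1 \<noteq> 0 \<or> t \<noteq> 0 \<or> x3 \<noteq> 0"
              using val na t by auto
            then have adj: "nabla_adj [a1,a2,a3] a [x1,x2,x3] [x1+c,t,x3]"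
              using val val2 t by (auto simp: adj3)
            have "t < x2" using t d0 by simp
            from less.IH[OF this] val2 obtain n1 n2 n3 where
              "n2 < d \<and> n3 < e \<and> n1*a1+n2*a2+n3*a3 = a \<and> (nabla_adj [a1,a2,a3] a)\<^sup>*\<^sup>* [x1+c,t,x3] [n1,n2,n3]"
              by blast
            then show ?thesis using adj by (blast intro: converse_rtranclp_into_rtranclp)
          next
            case False2: False
            show ?thesis using False False2 val by (intro exI[of _ x1] exI[of _ x2] exI[of _ x3]) auto
          qed
        qed
      qed
    qed
  qed
qed

lemma connected_gen:
  fixes a1 a2 a3 c d e u v a :: nat
  assumes hA: "c*a1 = d*a2" and hB: "e*a3 = u*a1 + v*a2" and e0: "e > 0" and d0: "d > 0"
    and hU: "\<And>x1 x2 x3 y1 y2 y3. x2 < d \<Longrightarrow> x3 < e \<Longrightarrow> y2 < d \<Longrightarrow> y3 < e \<Longrightarrow>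
        x1*a1+x2*a2+x3*a3 = y1*a1+y2*a2+y3*a3 \<Longrightarrow> x1 = y1 \<and> x2 = y2 \<and> x3 = y3"
    and na: "a \<noteq> d*a2" and nb: "a \<noteq> e*a3"
  shows "nabla_connected [a1,a2,a3] a"
  unfolding nabla_connected_def
proof (intro ballI)
  fix x y assume x: "x \<in> factorizations [a1,a2,a3] a" and y: "y \<in> factorizations [a1,a2,a3] a"
  from x obtain x1 x2 x3 where xx: "x = [x1,x2,x3]" "x1*a1+x2*a2+x3*a3 = a" unfolding fact3 by blast
  from y obtain y1 y2 y3 where yy: "y = [y1,y2,y3]" "y1*a1+y2*a2+y3*a3 = a" unfolding fact3 by blast
  from normal_reach[OF hA hB e0 d0 na nb, of x3] xx obtain n1 n2 n3 where
    n: "n2 < d" "n3 < e" "n1*a1+n2*a2+n3*a3 = a" "(nabla_adj [a1,a2,a3] a)\<^sup>*\<^sup>* x [n1,n2,n3]" by blast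
  from normal_reach[OF hA hB e0 d0 na nb, of y3] yy obtain m1 m2 m3 where
    m: "m2 < d" "m3 < e" "m1*a1+m2*a2+m3*a3 = a" "(nabla_adj [a1,a2,a3] a)\<^sup>*\<^sup>* y [m1,m2,m3]" by blast
  have "n1 = m1 \<and> n2 = m2 \<and> n3 = m3" using hU[OF n(1,2) m(1,2), of n1 m1] n(3) m(3) by simp
  then show "(nabla_adj [a1,a2,a3] a)\<^sup>*\<^sup>* x y" using n(4) reach_sym[OF m(4)]
    by (meson rtranclp_trans)
qed

lemma isolated:
  assumes "\<And>y. nabla_adj g b x y \<Longrightarrow> y = x" and "(nabla_adj g b)\<^sup>*\<^sup>* x z"
  shows "z = x"
  using assms(2) by (induction rule: rtranclp_induct) (auto dest: assms(1))

lemma betti_gen: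
  fixes a1 a2 a3 c d e u v :: nat
  assumes hA: "c*a1 = d*a2" and hB: "e*a3 = u*a1 + v*a2" and e0: "e > 0" and d0: "d > 0"
    and pos: "a2 > 0" "a3 > 0"
    and hU: "\<And>x1 x2 x3 y1 y2 y3. x2 < d \<Longrightarrow> x3 < e \<Longrightarrow> y2 < d \<Longrightarrow> y3 < e \<Longrightarrow>
        x1*a1+x2*a2+x3*a3 = y1*a1+y2*a2+y3*a3 \<Longrightarrow> x1 = y1 \<and> x2 = y2 \<and> x3 = y3"
    and isoA: "\<And>y1 y2 y3. y1*a1+y2*a2+y3*a3 = d*a2 \<Longrightarrow> y2 > 0 \<Longrightarrow> y1 = 0 \<and> y2 = d \<and> y3 = 0"
    and isoB: "\<And>y1 y2 y3. y1*a1+y2*a2+y3*a3 = e*a3 \<Longrightarrow> y3 > 0 \<Longrightarrow> y1 = 0 \<and> y2 = 0 \<and> y3 = e"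
  shows "Betti [a1,a2,a3] = {d*a2, e*a3}"
proof
  show "Betti [a1,a2,a3] \<subseteq> {d*a2, e*a3}"
    unfolding Betti_def using connected_gen[OF hA hB e0 d0 hU] by blast
next
  have A: "d*a2 \<in> Betti [a1,a2,a3]"
  proof -
    have f1: "[0,d,0] \<in> factorizations [a1,a2,a3] (d*a2)" unfolding fact3 by simp
    have f2: "[c,0,0] \<in> factorizations [a1,a2,a3] (d*a2)" unfolding fact3 using hA by simp
    have iso: "y = [0,d,0]" if "nabla_adj [a1,a2,a3] (d*a2) [0,d,0] y" for y
    proof -
      from that have "y \<in> factorizations [a1,a2,a3] (d*a2)" unfolding nabla_adj_def by blast
      then obtain y1 y2 y3 where yy: "y = [y1,y2,y3]" "y1*a1+y2*a2+y3*a3 = d*a2" unfolding fact3 by blast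
      with that have "y2 > 0" by (auto simp: adj3)
      with isoA[OF yy(2)] yy show ?thesis by simp
    qed
    have "\<not> (nabla_adj [a1,a2,a3] (d*a2))\<^sup>*\<^sup>* [0,d,0] [c,0,0]"
      using isolated[OF iso] d0 by fastforce
    then have "\<not> nabla_connected [a1,a2,a3] (d*a2)" unfolding nabla_connected_def using f1 f2 by blast
    moreover have "d*a2 \<in> semigroup_gen [a1,a2,a3]" unfolding semigroup_gen_def
      using f1 unfolding factorizations_def by blast
    ultimately show ?thesis unfolding Betti_def using d0 pos by auto
  qed
  have B: "e*a3 \<in> Betti [a1,a2,a3]"
  proof -
    have f1: "[0,0,e] \<in> factorizations [a1,a2,a3] (e*a3)" unfolding fact3 by simp
    have f2: "[u,v,0] \<in> factorizations [a1,a2,a3] (e*a3)" unfolding fact3 using hB by simp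
    have iso: "y = [0,0,e]" if "nabla_adj [a1,a2,a3] (e*a3) [0,0,e] y" for y
    proof -
      from that have "y \<in> factorizations [a1,a2,a3] (e*a3)" unfolding nabla_adj_def by blast
      then obtain y1 y2 y3 where yy: "y = [y1,y2,y3]" "y1*a1+y2*a2+y3*a3 = e*a3" unfolding fact3 by blast
      with that have "y3 > 0" by (auto simp: adj3)
      with isoB[OF yy(2)] yy show ?thesis by simp
    qed
    have "\<not> (nabla_adj [a1,a2,a3] (e*a3))\<^sup>*\<^sup>* [0,0,e] [u,v,0]"
      using isolated[OF iso] e0 by fastforce
    then have "\<not> nabla_connected [a1,a2,a3] (e*a3)" unfolding nabla_connected_def using f1 f2 by blast
    moreover have "e*a3 \<in> semigroup_gen [a1,a2,a3]" unfolding semigroup_gen_def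
      using f1 unfolding factorizations_def by blast
    ultimately show ?thesis unfolding Betti_def using e0 pos by auto
  qed
  show "{d*a2, e*a3} \<subseteq> Betti [a1,a2,a3]" using A B by blast
qed



lemma aux_k: fixes k x1 y1 x2 y2 :: nat
  assumes "\<not> 3 dvd k" "x2<3" "y2<3" "x1*6+x2*(2*k) = y1*6+y2*(2*k)" shows "x2 = y2"
proof -
  have "x2 = 0 \<or> x2 = 1 \<or> x2 = 2" "y2 = 0 \<or> y2 = 1 \<or> y2 = 2" using assms by auto
  then show ?thesis using assms(1,4) by (elim disjE) (simp_all, presburger+)
qed

lemma par: fixes m a b :: nat assumes "odd m" "x3 < 2" "y3 < 2" "2*a + x3*m = 2*b + y3*m" shows "x3 = y3"
proof -
  have "x3 = 0 \<or> x3 = 1" "y3 = 0 \<or> y3 = 1" using assms by auto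
  then show ?thesis using assms(1,4) by (elim disjE) (simp_all, presburger+)
qed

lemma aux_j: fixes j x1 y1 x2 y2 :: nat
  assumes "odd j" "x2<2" "y2<2" "x1*6+x2*(3*j) = y1*6+y2*(3*j)" shows "x2 = y2"
proof -
  have "x2 = 0 \<or> x2 = 1" "y2 = 0 \<or> y2 = 1" using assms by auto
  then show ?thesis using assms(1,4) by (elim disjE) (simp_all, presburger+)
qed

lemma par3: fixes n a b :: nat assumes "\<not> 3 dvd n" "x3 < 3" "y3 < 3" "3*a + x3*n = 3*b + y3*n" shows "x3 = y3"
proof -
  have "x3 = 0 \<or> x3 = 1 \<or> x3 = 2" "y3 = 0 \<or> y3 = 1 \<or> y3 = 2" using assms by auto
  then show ?thesis using assms(1,4) by (elim disjE) (simp_all, presburger+)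
qed

lemma case_k:
  fixes k m :: nat
  assumes k3: "\<not> 3 dvd k" and k0: "k > 0" and mo: "odd m" and mk: "m > 2*k"
  shows "Betti [6, 2*k, m] = {3*(2*k), 2*m}"
proof -
  have "m mod 3 = 0 \<or> (m - k) mod 3 = 0 \<or> (m - 2*k) mod 3 = 0" using k3 mk by presburger
  then have "\<exists>u v. 2*m = u*6 + v*(2*k)"
  proof (elim disjE)
    assume "m mod 3 = 0"
    then obtain q where "m = 3*q" by (elim mod_0_imp_dvd[THEN dvdE])
    then have "2*m = q*6 + 0*(2*k)" by linarith
    then show ?thesis by blast
  next
    assume "(m - k) mod 3 = 0"
    then obtain q where "m - k = 3*q" by (elim mod_0_imp_dvd[THEN dvdE])
    then have "2*m = q*6 + 1*(2*k)" using mk by linarith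
    then show ?thesis by blast
  next
    assume "(m - 2*k) mod 3 = 0"
    then obtain q where "m - 2*k = 3*q" by (elim mod_0_imp_dvd[THEN dvdE])
    then have "2*m = q*6 + 2*(2*k)" using mk by linarith
    then show ?thesis by blast
  qed
  then obtain u v where hB: "2*m = u*6 + v*(2*k)" by blast
  show ?thesis
  proof (rule betti_gen[where c=k and u=u and v=v])
    show "k*6 = 3*(2*k)" by simp
    show "2*m = u*6 + v*(2*k)" by (rule hB)
    show "(2::nat) > 0" "(3::nat) > 0" "2*k > 0" "m > 0" using k0 mk by auto
  next
    fix x1 x2 x3 y1 y2 y3 :: nat
    assume h: "x2 < 3" "x3 < 2" "y2 < 3" "y3 < 2" and eq: "x1*6+x2*(2*k)+x3*m = y1*6+y2*(2*k)+y3*m"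
    have "2*(x1*3+x2*k) + x3*m = 2*(y1*3+y2*k) + y3*m" using eq by (simp add: algebra_simps)
    then have e3: "x3 = y3" using par[OF mo h(2,4)] by blast
    then have "x1*6+x2*(2*k) = y1*6+y2*(2*k)" using eq by simp
    moreover from aux_k[OF k3 h(1,3) this] have "x2 = y2" .
    ultimately show "x1 = y1 \<and> x2 = y2 \<and> x3 = y3" using e3 by simp
  next
    fix y1 y2 y3 :: nat
    assume eq: "y1*6+y2*(2*k)+y3*m = 3*(2*k)" and y2: "y2 > 0"
    have b2: "y2 \<le> 3"
    proof (rule ccontr)
      assume "\<not> y2 \<le> 3"
      then have "y2*(2*k) \<ge> 4*(2*k)" by (intro mult_right_mono) auto
      then show False using eq k0 by linarith
    qed
    have b3: "y3 \<le> 1"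
    proof (rule ccontr)
      assume "\<not> y3 \<le> 1"
      then have "y3*m \<ge> 2*m" by (intro mult_right_mono) auto
      moreover have "y2*(2*k) \<ge> 1*(2*k)" using y2 by (intro mult_right_mono) auto
      ultimately show False using eq mk by linarith
    qed
    have "y2 = 1 \<or> y2 = 2 \<or> y2 = 3" "y3 = 0 \<or> y3 = 1" using b2 b3 y2 by auto
    then show "y1 = 0 \<and> y2 = 3 \<and> y3 = 0" using eq k3 mo by (elim disjE) (simp_all, presburger+)
  next
    fix y1 y2 y3 :: nat
    assume eq: "y1*6+y2*(2*k)+y3*m = 2*m" and y3: "y3 > 0"
    have b3: "y3 \<le> 2"
    proof (rule ccontr)
      assume "\<not> y3 \<le> 2"
      then have "y3*m \<ge> 3*m" by (intro mult_right_mono) auto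
      then show False using eq mk by linarith
    qed
    have w: "y2*(2*k) = 2*(y2*k)" by simp
    obtain w where w: "y2*(2*k) = 2*w" by (rule that[OF w])
    have "y3 = 1 \<or> y3 = 2" using b3 y3 by auto
    then show "y1 = 0 \<and> y2 = 0 \<and> y3 = 2"
    proof
      assume "y3 = 1" then show ?thesis using eq w mo by presburger
    next
      assume "y3 = 2" then show ?thesis using eq k0 by simp
    qed
  qed
qed

lemma case_j:
  fixes j n :: nat
  assumes jo: "odd j" and n3: "\<not> 3 dvd n" and nj: "n > 3*j"
  shows "Betti [6, 3*j, n] = {2*(3*j), 3*n}"
proof -
  have j0: "j > 0" using jo by (cases j) auto
  have "\<exists>u v. 3*n = u*6 + v*(3*j)"
  proof (cases "even n")
    case True
    then obtain q where "n = 2*q" by (elim evenE)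
    then have "3*n = q*6 + 0*(3*j)" by linarith
    then show ?thesis by blast
  next
    case False
    have "even (n - j)" using False jo nj by presburger
    then obtain q where "n - j = 2*q" by (elim evenE)
    then have "3*n = q*6 + 1*(3*j)" using nj by linarith
    then show ?thesis by blast
  qed
  then obtain u v where hB: "3*n = u*6 + v*(3*j)" by blast
  show ?thesis
  proof (rule betti_gen[where c=j and u=u and v=v])
    show "j*6 = 2*(3*j)" by simp
    show "3*n = u*6 + v*(3*j)" by (rule hB)
    show "(3::nat) > 0" "(2::nat) > 0" "3*j > 0" "n > 0" using j0 nj by auto
  next
    fix x1 x2 x3 y1 y2 y3 :: nat
    assume h: "x2 < 2" "x3 < 3" "y2 < 2" "y3 < 3" and eq: "x1*6+x2*(3*j)+x3*n = y1*6+y2*(3*j)+y3*n"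
    have "3*(x1*2+x2*j) + x3*n = 3*(y1*2+y2*j) + y3*n" using eq by (simp add: algebra_simps)
    then have e3: "x3 = y3" using par3[OF n3 h(2,4)] by blast
    then have "x1*6+x2*(3*j) = y1*6+y2*(3*j)" using eq by simp
    moreover from aux_j[OF jo h(1,3) this] have "x2 = y2" .
    ultimately show "x1 = y1 \<and> x2 = y2 \<and> x3 = y3" using e3 by simp
  next
    fix y1 y2 y3 :: nat
    assume eq: "y1*6+y2*(3*j)+y3*n = 2*(3*j)" and y2: "y2 > 0"
    have b2: "y2 \<le> 2"
    proof (rule ccontr)
      assume "\<not> y2 \<le> 2"
      then have "y2*(3*j) \<ge> 3*(3*j)" by (intro mult_right_mono) auto
      then show False using eq j0 by linarith
    qed
    have b3: "y3 = 0"
    proof (rule ccontr)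
      assume "\<not> y3 = 0"
      then have "y3*n \<ge> 1*n" by (intro mult_right_mono) auto
      moreover have "y2*(3*j) \<ge> 1*(3*j)" using y2 by (intro mult_right_mono) auto
      ultimately show False using eq nj by linarith
    qed
    have "y2 = 1 \<or> y2 = 2" using b2 y2 by auto
    then show "y1 = 0 \<and> y2 = 2 \<and> y3 = 0" using eq b3 jo by (elim disjE) (simp_all, presburger+)
  next
    fix y1 y2 y3 :: nat
    assume eq: "y1*6+y2*(3*j)+y3*n = 3*n" and y3: "y3 > 0"
    have b3: "y3 \<le> 3"
    proof (rule ccontr)
      assume "\<not> y3 \<le> 3"
      then have "y3*n \<ge> 4*n" by (intro mult_right_mono) auto
      then show False using eq nj by linarith
    qed
    have w: "y2*(3*j) = 3*(y2*j)" by simp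
    obtain w where w: "y2*(3*j) = 3*w" by (rule that[OF w])
    have "y3 = 1 \<or> y3 = 2 \<or> y3 = 3" using b3 y3 by auto
    then show "y1 = 0 \<and> y2 = 0 \<and> y3 = 3"
    proof (elim disjE)
      assume "y3 = 1" then show ?thesis using eq w n3 by presburger
    next
      assume "y3 = 2" then show ?thesis using eq w n3 by presburger
    next
      assume "y3 = 3" then show ?thesis using eq j0 by simp
    qed
  qed
qed


theorem theorem4:
  fixes \<alpha> :: nat
  shows "(\<forall>m::nat. odd m \<and> m > 6*\<alpha>+2 \<longrightarrow>
            Betti [6, 6*\<alpha>+2, m] = {18*\<alpha>+6, 2*m})
       \<and> (\<forall>n::nat. \<not> 3 dvd n \<and> n > 6*\<alpha>+3 \<longrightarrow>
            Betti [6, 6*\<alpha>+3, n] = {12*\<alpha>+6, 3*n})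
       \<and> (\<forall>p::nat. odd p \<and> p > 6*\<alpha>+4 \<longrightarrow>
            Betti [6, 6*\<alpha>+4, p] = {18*\<alpha>+12, 2*p})"
proof (intro conjI allI impI)
  fix m :: nat assume h: "odd m \<and> m > 6*\<alpha>+2"
  have k3: "\<not> 3 dvd (3*\<alpha>+1)" by presburger
  have B: "Betti [6, 2*(3*\<alpha>+1), m] = {3*(2*(3*\<alpha>+1)), 2*m}"
    using case_k[OF k3] h by simp
  have e: "2*(3*\<alpha>+1) = 6*\<alpha>+2" "3*(6*\<alpha>+2) = 18*\<alpha>+6" by simp_all
  show "Betti [6, 6*\<alpha>+2, m] = {18*\<alpha>+6, 2*m}" using B[unfolded e(1), unfolded e(2)] .
next
  fix n :: nat assume h: "\<not> 3 dvd n \<and> n > 6*\<alpha>+3"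
  have jo: "odd (2*\<alpha>+1)" by simp
  have B: "Betti [6, 3*(2*\<alpha>+1), n] = {2*(3*(2*\<alpha>+1)), 3*n}"
    using case_j[OF jo] h by simp
  have e: "3*(2*\<alpha>+1) = 6*\<alpha>+3" "2*(6*\<alpha>+3) = 12*\<alpha>+6" by simp_all
  show "Betti [6, 6*\<alpha>+3, n] = {12*\<alpha>+6, 3*n}" using B[unfolded e(1), unfolded e(2)] .
next
  fix m :: nat assume h: "odd m \<and> m > 6*\<alpha>+4"
  have k3: "\<not> 3 dvd (3*\<alpha>+2)" by presburger
  have B: "Betti [6, 2*(3*\<alpha>+2), m] = {3*(2*(3*\<alpha>+2)), 2*m}"
    using case_k[OF k3] h by simp
  have e: "2*(3*\<alpha>+2) = 6*\<alpha>+4" "3*(6*\<alpha>+4) = 18*\<alpha>+12" by simp_all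
  show "Betti [6, 6*\<alpha>+4, m] = {18*\<alpha>+12, 2*m}" using B[unfolded e(1), unfolded e(2)] .
qed

end
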